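(* If $G$ is a group in which every non-trivial element is a generalized torsion element, then $\mathrm{scl}_G(g)=0$ for all $g\in G$.
   Context: For $g,x$ in a group, $g^{x}:=xgx^{-1}$. A non-trivial element $g$ of a group $G$ is a generalized torsion element if there exist a positive integer $n$ and $x_1,\ldots,x_n\in G$ with $g^{x_1}g^{x_2}\cdots g^{x_n}=1$. For $g\in[G,G]$, the commutator length $\mathrm{cl}_G(g)$ is the least number of commutators whose product is $g$, and the stable commutator length is $\mathrm{scl}_G(g)=\lim_{n\to\infty}\mathrm{cl}_G(g^n)/n$. This is extended to all of $G$ by $\mathrm{scl}_G(g)=\mathrm{scl}_G(g^k)/k$ if $g^k\in[G,G]$ for some $k>0$, and $\mathrm{scl}_G(g)=\infty$ otherwise. *)

theory Defs
  imports "HOL-Algebra.Algebra" "HOL-Library.Extended_Real"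
begin

text \<open>Conjugation convention of the paper: g^x = x g x^{-1}.\<close>
definition conjug :: "('a, 'b) monoid_scheme \<Rightarrow> 'a \<Rightarrow> 'a \<Rightarrow> 'a" where
  "conjug G g x = x \<otimes>\<^bsub>G\<^esub> g \<otimes>\<^bsub>G\<^esub> inv\<^bsub>G\<^esub> x"

definition gen_torsion :: "('a, 'b) monoid_scheme \<Rightarrow> 'a \<Rightarrow> bool" where
  "gen_torsion G g \<longleftrightarrow> g \<in> carrier G \<and> g \<noteq> \<one>\<^bsub>G\<^esub> \<and>
     (\<exists>xs. length xs > 0 \<and> set xs \<subseteq> carrier G \<and>
        foldr (\<lambda>x r. conjug G g x \<otimes>\<^bsub>G\<^esub> r) xs \<one>\<^bsub>G\<^esub> = \<one>\<^bsub>G\<^esub>)"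

definition commutator :: "('a, 'b) monoid_scheme \<Rightarrow> 'a \<Rightarrow> 'a \<Rightarrow> 'a" where
  "commutator G a b = a \<otimes>\<^bsub>G\<^esub> b \<otimes>\<^bsub>G\<^esub> inv\<^bsub>G\<^esub> a \<otimes>\<^bsub>G\<^esub> inv\<^bsub>G\<^esub> b"

text \<open>Commutator length: least number of commutators whose product is g
  (meaningful for g in the commutator subgroup derived G (carrier G)).\<close>
definition comm_length :: "('a, 'b) monoid_scheme \<Rightarrow> 'a \<Rightarrow> nat" where
  "comm_length G g = (LEAST k. \<exists>cs. length cs = k \<and>
      (\<forall>(a, b) \<in> set cs. a \<in> carrier G \<and> b \<in> carrier G) \<and>
      g = foldr (\<lambda>(a, b) r. commutator G a b \<otimes>\<^bsub>G\<^esub> r) cs \<one>\<^bsub>G\<^esub>)"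

definition scl0 :: "('a, 'b) monoid_scheme \<Rightarrow> 'a \<Rightarrow> real" where
  "scl0 G g = lim (\<lambda>n. real (comm_length G (g [^]\<^bsub>G\<^esub> n)) / real n)"

definition scl :: "('a, 'b) monoid_scheme \<Rightarrow> 'a \<Rightarrow> ereal" where
  "scl G g = (if \<exists>k::nat. k > 0 \<and> g [^]\<^bsub>G\<^esub> k \<in> derived G (carrier G)
     then (let k = (LEAST k::nat. k > 0 \<and> g [^]\<^bsub>G\<^esub> k \<in> derived G (carrier G))
           in ereal (scl0 G (g [^]\<^bsub>G\<^esub> k) / real k))
     else \<infinity>)"

end

theory Submission
  imports Defs
begin

definition prodc :: "('a, 'b) monoid_scheme \<Rightarrow> ('a \<times> 'a) list \<Rightarrow> 'a" where
  "prodc G cs = foldr (\<lambda>(a, b) r. commutator G a b \<otimes>\<^bsub>G\<^esub> r) cs \<one>\<^bsub>G\<^esub>"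

definition repr :: "('a, 'b) monoid_scheme \<Rightarrow> nat \<Rightarrow> 'a \<Rightarrow> bool" where
  "repr G k g \<longleftrightarrow> (\<exists>cs. length cs = k \<and>
      (\<forall>(a, b) \<in> set cs. a \<in> carrier G \<and> b \<in> carrier G) \<and> g = prodc G cs)"

context group begin

lemma commutator_closed[simp]: "a \<in> carrier G \<Longrightarrow> b \<in> carrier G \<Longrightarrow> commutator G a b \<in> carrier G"
  by (simp add: commutator_def)

lemma prodc_closed: "\<forall>(a, b) \<in> set cs. a \<in> carrier G \<and> b \<in> carrier G \<Longrightarrow> prodc G cs \<in> carrier G"
  by (induction cs) (auto simp: prodc_def)

lemma prodc_append: "\<forall>(a, b) \<in> set cs. a \<in> carrier G \<and> b \<in> carrier G \<Longrightarrow>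
   \<forall>(a, b) \<in> set ds. a \<in> carrier G \<and> b \<in> carrier G \<Longrightarrow>
   prodc G (cs @ ds) = prodc G cs \<otimes> prodc G ds"
proof (induction cs)
  case Nil then show ?case using prodc_closed[of ds] by (simp add: prodc_def)
next
  case (Cons c cs)
  obtain a b where c: "c = (a, b)" by force
  have "prodc G (c # cs @ ds) = commutator G a b \<otimes> prodc G (cs @ ds)"
    by (simp add: prodc_def c)
  also have "\<dots> = commutator G a b \<otimes> (prodc G cs \<otimes> prodc G ds)" using Cons by simp
  also have "\<dots> = (commutator G a b \<otimes> prodc G cs) \<otimes> prodc G ds"
    using Cons c prodc_closed[of cs] prodc_closed[of ds] by (simp add: m_assoc)
  also have "commutator G a b \<otimes> prodc G cs = prodc G (c # cs)" by (simp add: prodc_def c)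
  finally show ?case by simp
qed

lemma repr_mult: "repr G k x \<Longrightarrow> repr G l y \<Longrightarrow> repr G (k + l) (x \<otimes> y)"
  unfolding repr_def
proof (elim exE conjE)
  fix cs ds assume "length cs = k" "\<forall>(a, b) \<in> set cs. a \<in> carrier G \<and> b \<in> carrier G" "x = prodc G cs"
    "length ds = l" "\<forall>(a, b) \<in> set ds. a \<in> carrier G \<and> b \<in> carrier G" "y = prodc G ds"
  then show "\<exists>cs. length cs = k + l \<and> (\<forall>(a, b)\<in>set cs. a \<in> carrier G \<and> b \<in> carrier G) \<and> x \<otimes> y = prodc G cs"
    by (intro exI[of _ "cs @ ds"]) (auto simp: prodc_append)
qed

lemma repr_one: "repr G 0 \<one>"
  unfolding repr_def by (intro exI[of _ "[]"]) (simp add: prodc_def)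

lemma repr_closed: "repr G k x \<Longrightarrow> x \<in> carrier G"
  unfolding repr_def using prodc_closed by blast

lemma repr_pow: "repr G k x \<Longrightarrow> repr G (k * n) (x [^] n)"
proof (induction n)
  case 0 then show ?case by (simp add: repr_one)
next
  case (Suc n)
  have "repr G (k * n + k) (x [^] n \<otimes> x)" using Suc repr_mult by blast
  then show ?case by (simp add: add.commute)
qed

lemma cl_le: "repr G k x \<Longrightarrow> comm_length G x \<le> k"
  unfolding comm_length_def repr_def prodc_def by (rule Least_le) blast

lemma cl_repr: "repr G k x \<Longrightarrow> repr G (comm_length G x) x"
  unfolding comm_length_def repr_def prodc_def by (rule LeastI) blast

lemma commutator_inv: "a \<in> carrier G \<Longrightarrow> b \<in> carrier G \<Longrightarrow> inv (commutator G a b) = commutator G b a"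
  by (simp add: commutator_def inv_mult_group m_assoc)

lemma derived_repr: "x \<in> derived G (carrier G) \<Longrightarrow> \<exists>k. repr G k x"
  unfolding derived_def
proof (induction rule: generate.induct)
  case one then show ?case using repr_one by blast
next
  case (incl h)
  then obtain a b where ab: "a \<in> carrier G" "b \<in> carrier G" "h = commutator G a b"
    by (auto simp: commutator_def)
  then have "repr G 1 h" unfolding repr_def
    by (intro exI[of _ "[(a,b)]"]) (simp add: prodc_def)
  then show ?case by blast
next
  case (inv h)
  then obtain a b where ab: "a \<in> carrier G" "b \<in> carrier G" "h = commutator G a b"
    by (auto simp: commutator_def)
  then have "repr G 1 (inv h)" unfolding repr_def
    by (intro exI[of _ "[(b,a)]"]) (simp add: prodc_def commutator_inv)
  then show ?case by blast
next
  case (eng h1 h2) then show ?case using repr_mult by blast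
qed

lemma prodc_derived: "\<forall>(a, b) \<in> set cs. a \<in> carrier G \<and> b \<in> carrier G \<Longrightarrow> prodc G cs \<in> derived G (carrier G)"
proof (induction cs)
  case Nil then show ?case
    using subgroup.one_closed[OF derived_is_subgroup[of "carrier G"]] by (simp add: prodc_def)
next
  case (Cons c cs)
  obtain a b where c: "c = (a, b)" by force
  have ab: "a \<in> carrier G" "b \<in> carrier G" using Cons.prems c by auto
  have "commutator G a b \<in> derived G (carrier G)"
    unfolding derived_def commutator_def
    by (rule generate.incl, rule UN_I[OF ab(1)], rule UN_I[OF ab(2)]) simp
  then show ?case using Cons c subgroup.m_closed[OF derived_is_subgroup[of "carrier G"]]
    by (simp add: prodc_def)
qed

lemma repr_derived: "repr G k x \<Longrightarrow> x \<in> derived G (carrier G)"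
  unfolding repr_def using prodc_derived by blast

lemma canc: "a \<in> carrier G \<Longrightarrow> y \<in> carrier G \<Longrightarrow> a \<otimes> (inv a \<otimes> y) = y"
  by (simp add: m_assoc[symmetric])

lemma conj_step:
  assumes v: "v \<in> carrier G" and x: "x \<in> carrier G" and P: "P \<in> carrier G"
  shows "conjug G v x \<otimes> (v [^] L \<otimes> P) =
     v [^] Suc L \<otimes> (commutator G (inv (v [^] Suc L) \<otimes> x) v \<otimes> P)"
proof -
  have e: "v [^] Suc L = v [^] L \<otimes> v" by simp
  show ?thesis
    unfolding conjug_def commutator_def e using v x P
    by (simp add: m_assoc inv_mult_group canc)
qed


lemma foldr_conj:
  assumes v: "v \<in> carrier G"
  shows "set xs \<subseteq> carrier G \<Longrightarrow> \<exists>cs. length cs = length xs \<and>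
     (\<forall>(a, b) \<in> set cs. a \<in> carrier G \<and> b \<in> carrier G) \<and>
     foldr (\<lambda>x r. conjug G v x \<otimes> r) xs \<one> = v [^] length xs \<otimes> prodc G cs"
proof (induction xs)
  case Nil then show ?case by (intro exI[of _ "[]"]) (simp add: prodc_def)
next
  case (Cons x xs)
  then obtain cs where cs: "length cs = length xs"
     "\<forall>(a, b) \<in> set cs. a \<in> carrier G \<and> b \<in> carrier G"
     "foldr (\<lambda>x r. conjug G v x \<otimes> r) xs \<one> = v [^] length xs \<otimes> prodc G cs" by auto
  have x: "x \<in> carrier G" using Cons by simp
  let ?c = "(inv (v [^] Suc (length xs)) \<otimes> x, v)"
  have "foldr (\<lambda>x r. conjug G v x \<otimes> r) (x # xs) \<one> = conjug G v x \<otimes> (v [^] length xs \<otimes> prodc G cs)"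
    using cs by simp
  also have "\<dots> = v [^] length (x # xs) \<otimes> prodc G (?c # cs)"
    using conj_step[OF v x prodc_closed[OF cs(2)]] by (simp add: prodc_def)
  finally show ?case using cs x v by (intro exI[of _ "?c # cs"]) auto
qed

lemma torsion_repr:
  assumes u: "u \<in> carrier G" and t: "gen_torsion G (inv u)"
  shows "\<exists>N>0. repr G N (u [^] N)"
proof -
  obtain xs where xs: "length xs > 0" "set xs \<subseteq> carrier G"
    "foldr (\<lambda>x r. conjug G (inv u) x \<otimes> r) xs \<one> = \<one>"
    using t unfolding gen_torsion_def by blast
  obtain cs where cs: "length cs = length xs"
     "\<forall>(a, b) \<in> set cs. a \<in> carrier G \<and> b \<in> carrier G"
     "foldr (\<lambda>x r. conjug G (inv u) x \<otimes> r) xs \<one> = inv u [^] length xs \<otimes> prodc G cs"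
    using foldr_conj[OF inv_closed[OF u] xs(2)] by blast
  let ?N = "length xs"
  have P: "prodc G cs \<in> carrier G" using prodc_closed[OF cs(2)] .
  have "inv u [^] ?N \<otimes> prodc G cs = \<one>"
    using xs(3) cs(3) by simp
  then have "inv (u [^] ?N) \<otimes> prodc G cs = \<one>"
    by (simp only: nat_pow_inv[OF u])
  also have "\<one> = inv (u [^] ?N) \<otimes> u [^] ?N"
    using u by (simp only: l_inv nat_pow_closed)
  finally have "prodc G cs = u [^] ?N"
    using P u by (simp only: l_cancel nat_pow_closed inv_closed)
  then have "repr G ?N (u [^] ?N)" unfolding repr_def using cs(1,2) by (intro exI[of _ cs]) simp
  then show ?thesis using xs(1) by blast
qed

lemma cl_mult: "x \<in> derived G (carrier G) \<Longrightarrow> y \<in> derived G (carrier G) \<Longrightarrow>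
   comm_length G (x \<otimes> y) \<le> comm_length G x + comm_length G y"
proof -
  assume x: "x \<in> derived G (carrier G)" and y: "y \<in> derived G (carrier G)"
  obtain k l where "repr G k x" "repr G l y" using derived_repr x y by blast
  then have "repr G (comm_length G x) x" "repr G (comm_length G y) y" using cl_repr by blast+
  then show ?thesis using cl_le repr_mult by blast
qed

lemma derived_pow: "x \<in> derived G (carrier G) \<Longrightarrow> x [^] (n::nat) \<in> derived G (carrier G)"
proof -
  assume x: "x \<in> derived G (carrier G)"
  obtain k where "repr G k x" using derived_repr x by blast
  then have "repr G (k * n) (x [^] n)" by (rule repr_pow)
  then show ?thesis by (rule repr_derived)
qed

lemma power_bound:
  assumes u: "u \<in> derived G (carrier G)"
    and hyp: "\<forall>g \<in> carrier G. g \<noteq> \<one> \<longrightarrow> gen_torsion G g"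
  shows "\<exists>C. \<forall>p. comm_length G (u [^] p) \<le> p + C"
proof (cases "u = \<one>")
  case True
  then show ?thesis using cl_le[OF repr_one] by auto
next
  case False
  have uc: "u \<in> carrier G" using u derived_in_carrier[of "carrier G"] by blast
  have "inv u \<noteq> \<one>" using False uc by simp
  then have "gen_torsion G (inv u)" using hyp uc by simp
  then obtain N where N: "N > 0" "repr G N (u [^] N)" using torsion_repr[OF uc] by blast
  define C where "C = (\<Sum>r<N. comm_length G (u [^] r))"
  have "comm_length G (u [^] p) \<le> p + C" for p
  proof -
    have e: "u [^] p = (u [^] N) [^] (p div N) \<otimes> u [^] (p mod N)"
    proof -
      have "u [^] p = u [^] (N * (p div N) + p mod N)" by simp
      also have "\<dots> = u [^] (N * (p div N)) \<otimes> u [^] (p mod N)"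
        by (rule nat_pow_mult[symmetric, OF uc])
      also have "u [^] (N * (p div N)) = (u [^] N) [^] (p div N)"
        by (rule nat_pow_pow[symmetric, OF uc])
      finally show ?thesis .
    qed
    have r1: "repr G (N * (p div N)) ((u [^] N) [^] (p div N))" using repr_pow[OF N(2)] .
    have r2: "repr G (comm_length G (u [^] (p mod N))) (u [^] (p mod N))"
      using derived_pow[OF u] cl_repr derived_repr by blast
    have "comm_length G (u [^] p) \<le> N * (p div N) + comm_length G (u [^] (p mod N))"
      using cl_le[OF repr_mult[OF r1 r2]] e by simp
    also have "comm_length G (u [^] (p mod N)) \<le> C"
      unfolding C_def using N(1) by (intro member_le_sum) auto
    also have "N * (p div N) \<le> p" by simp
    finally show ?thesis by simp
  qed
  then show ?thesis by blast
qed

lemma linear_bound: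
  assumes h: "h \<in> derived G (carrier G)"
    and hyp: "\<forall>g \<in> carrier G. g \<noteq> \<one> \<longrightarrow> gen_torsion G g"
    and m: "m > (0::nat)"
  shows "\<exists>E. \<forall>n. real (comm_length G (h [^] n)) \<le> real n / real m + E"
proof -
  have hc: "h \<in> carrier G" using h derived_in_carrier[of "carrier G"] by blast
  obtain C where C: "\<And>p. comm_length G ((h [^] m) [^] p) \<le> p + C"
    using power_bound[OF derived_pow[OF h] hyp] by blast
  define D where "D = (\<Sum>r<m. comm_length G (h [^] r))"
  have "real (comm_length G (h [^] n)) \<le> real n / real m + (C + D)" for n
  proof -
    have e: "h [^] n = (h [^] m) [^] (n div m) \<otimes> h [^] (n mod m)"
    proof -
      have "h [^] n = h [^] (m * (n div m) + n mod m)" by simp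
      also have "\<dots> = h [^] (m * (n div m)) \<otimes> h [^] (n mod m)"
        by (rule nat_pow_mult[symmetric, OF hc])
      also have "h [^] (m * (n div m)) = (h [^] m) [^] (n div m)"
        by (rule nat_pow_pow[symmetric, OF hc])
      finally show ?thesis .
    qed
    have "comm_length G (h [^] n) \<le> comm_length G ((h [^] m) [^] (n div m)) + comm_length G (h [^] (n mod m))"
      unfolding e by (intro cl_mult derived_pow h)
    also have "comm_length G (h [^] (n mod m)) \<le> D"
      unfolding D_def using m by (intro member_le_sum) auto
    also have "comm_length G ((h [^] m) [^] (n div m)) \<le> n div m + C" using C .
    finally have "real (comm_length G (h [^] n)) \<le> real (n div m) + C + D" by linarith
    moreover have "real (n div m) \<le> real n / real m"
    proof -
      have "n div m * m \<le> n" by simp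
      then have "real (n div m) * real m \<le> real n" by (metis of_nat_le_iff of_nat_mult)
      then show ?thesis using m by (simp add: pos_le_divide_eq)
    qed
    ultimately show ?thesis by simp
  qed
  then show ?thesis by blast
qed

end

lemma seq_zero:
  fixes a :: "nat \<Rightarrow> real"
  assumes nn: "\<And>n. 0 \<le> a n"
    and b: "\<And>m. m > (0::nat) \<Longrightarrow> \<exists>E. \<forall>n. a n \<le> real n / real m + E"
  shows "(\<lambda>n. a n / real n) \<longlonglongrightarrow> 0"
proof (rule LIMSEQ_I)
  fix r :: real assume r: "0 < r"
  define m where "m = nat (ceiling (2 / r)) + 1"
  have m0: "m > 0" unfolding m_def by simp
  have "real m > 2 / r" unfolding m_def by linarith
  then have mr: "1 / real m < r / 2" using r m0 by (simp add: field_simps)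
  obtain E where E: "\<And>n. a n \<le> real n / real m + E" using b[OF m0] by blast
  have E0: "E \<ge> 0" using E[of 0] nn[of 0] by simp
  define no where "no = nat (ceiling (2 * E / r)) + 1"
  have "\<forall>n\<ge>no. norm (a n / real n - 0) < r"
  proof (intro allI impI)
    fix n assume n: "n \<ge> no"
    have n0: "real n > 0" using n unfolding no_def by simp
    have nE: "real n > 2 * E / r" using n unfolding no_def by linarith
    then have "E / real n < r / 2" using r n0 by (simp add: field_simps)
    have "a n / real n \<le> (real n / real m + E) / real n"
      using E[of n] n0 by (simp add: divide_right_mono)
    also have "\<dots> = 1 / real m + E / real n" using n0 by (simp add: field_simps)
    also have "\<dots> < r" using mr \<open>E / real n < r / 2\<close> by linarith
    finally show "norm (a n / real n - 0) < r" using nn[of n] n0 by simp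
  qed
  then show "\<exists>no. \<forall>n\<ge>no. norm (a n / real n - 0) < r" by blast
qed

theorem proposition3p3:
  fixes G :: "('a, 'b) monoid_scheme"
  assumes "group G"
    and "\<forall>g \<in> carrier G. g \<noteq> \<one>\<^bsub>G\<^esub> \<longrightarrow> gen_torsion G g"
  shows "\<forall>g \<in> carrier G. scl G g = 0"
proof
  interpret group G by fact
  fix g assume g: "g \<in> carrier G"
  have ex: "\<exists>k::nat. k > 0 \<and> g [^]\<^bsub>G\<^esub> k \<in> derived G (carrier G)"
  proof (cases "g = \<one>\<^bsub>G\<^esub>")
    case True
    then show ?thesis
      using subgroup.one_closed[OF derived_is_subgroup[of "carrier G"]]
      by (intro exI[of _ 1]) simp
  next
    case False
    have "inv\<^bsub>G\<^esub> g \<noteq> \<one>\<^bsub>G\<^esub>" using False g by simp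
    then have "gen_torsion G (inv\<^bsub>G\<^esub> g)" using assms(2) g by simp
    then obtain N where "N > 0" "repr G N (g [^]\<^bsub>G\<^esub> N)" using torsion_repr[OF g] by blast
    then show ?thesis using repr_derived by blast
  qed
  define k where "k = (LEAST k::nat. k > 0 \<and> g [^]\<^bsub>G\<^esub> k \<in> derived G (carrier G))"
  have k: "k > 0 \<and> g [^]\<^bsub>G\<^esub> k \<in> derived G (carrier G)"
    unfolding k_def using LeastI_ex[OF ex] .
  have "(\<lambda>n. real (comm_length G ((g [^]\<^bsub>G\<^esub> k) [^]\<^bsub>G\<^esub> n)) / real n) \<longlonglongrightarrow> 0"
    by (rule seq_zero[OF _ linear_bound[OF conjunct2[OF k] assms(2)]]) simp_all
  then have "scl0 G (g [^]\<^bsub>G\<^esub> k) = 0" unfolding scl0_def by (rule limI)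
  then show "scl G g = 0" using ex unfolding scl_def k_def[symmetric] Let_def by simp
qed

end
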